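(* Let $X$ be a real Banach space and let $x, y \in X$ be non-zero. Then the following are equivalent: (i) there exist $\lambda < 0$ and $r > 0$ such that the open ball $B(\lambda x, r) = \{ z \in X : \|\lambda x - z\| < r\}$ contains $y$ but does not contain the zero vector; (ii) $\rho'_{+}(x, y) < 0$.
   Context: For $x, y$ in a real normed space $X$, the norm derivatives are $\rho'_{+}(x,y) = \lim_{t \to 0^+} \|x\| \frac{\|x+ty\| - \|x\|}{t}$ and $\rho'_{-}(x,y) = \lim_{t \to 0^-} \|x\| \frac{\|x+ty\| - \|x\|}{t}$. Balls are open balls. *)

theory Defs
  imports "HOL-Analysis.Analysis"
begin

text \<open>Norm derivative rho'_+(x,y) = lim_{t -> 0+} ||x|| (||x+ty|| - ||x||)/t.
  The limit always exists in a real normed space (convexity of the norm).\<close>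
definition rho_plus :: "'a::real_normed_vector \<Rightarrow> 'a \<Rightarrow> real" where
  "rho_plus x y = Lim (at_right 0) (\<lambda>t. norm x * (norm (x + t *\<^sub>R y) - norm x) / t)"

definition rho_minus :: "'a::real_normed_vector \<Rightarrow> 'a \<Rightarrow> real" where
  "rho_minus x y = Lim (at_left 0) (\<lambda>t. norm x * (norm (x + t *\<^sub>R y) - norm x) / t)"

end

theory Submission
  imports Defs
begin

lemma quot_mono:
  fixes x y :: "'a::real_normed_vector"
  assumes s: "0 < s" "s < t"
  shows "(norm (x + s *\<^sub>R y) - norm x) / s \<le> (norm (x + t *\<^sub>R y) - norm x) / t"
proof -
  have t: "t > 0" using s by linarith
  have eq: "x + s *\<^sub>R y = (1 - s/t) *\<^sub>R x + (s/t) *\<^sub>R (x + t *\<^sub>R y)"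
    using t by (simp add: algebra_simps)
  have "norm (x + s *\<^sub>R y) \<le> norm ((1 - s/t) *\<^sub>R x) + norm ((s/t) *\<^sub>R (x + t *\<^sub>R y))"
    unfolding eq by (rule norm_triangle_ineq)
  also have "\<dots> = (1 - s/t) * norm x + (s/t) * norm (x + t *\<^sub>R y)"
    using s t by simp
  finally have h: "norm (x + s *\<^sub>R y) - norm x \<le> (s/t) * (norm (x + t *\<^sub>R y) - norm x)"
    by (simp add: algebra_simps)
  have "(norm (x + s *\<^sub>R y) - norm x) / s \<le> ((s/t) * (norm (x + t *\<^sub>R y) - norm x)) / s"
    using s by (intro divide_right_mono[OF h]) simp
  also have "\<dots> = (norm (x + t *\<^sub>R y) - norm x) / t" using s t by simp
  finally show ?thesis .
qed

lemma quot_lb: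
  fixes x y :: "'a::real_normed_vector"
  assumes "0 < t"
  shows "- norm y \<le> (norm (x + t *\<^sub>R y) - norm x) / t"
proof -
  have "norm x \<le> norm (x + t *\<^sub>R y) + norm (t *\<^sub>R y)"
    by (metis add_diff_cancel_right' norm_triangle_ineq4)
  then have "- (t * norm y) \<le> norm (x + t *\<^sub>R y) - norm x" using assms by simp
  then show ?thesis using assms by (simp add: divide_simps mult.commute)
qed

theorem mainTheorem2:
  fixes x y :: "'a::banach"
  assumes "x \<noteq> 0" and "y \<noteq> 0"
  shows "(\<exists>l::real. \<exists>r::real. l < 0 \<and> r > 0 \<and>
            y \<in> ball (l *\<^sub>R x) r \<and> 0 \<notin> ball (l *\<^sub>R x) r)
         \<longleftrightarrow> rho_plus x y < 0"
proof -
  define g where "g t = (norm (x + t *\<^sub>R y) - norm x) / t" for t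
  define L where "L = Inf (g ` {0<..})"
  have bdd: "bdd_below (g ` {0<..})"
    unfolding g_def by (rule bdd_belowI[where m="- norm y"]) (auto intro: quot_lb)
  have ne: "g ` {0<..} \<noteq> {}" by auto
  have Lle: "L \<le> g t" if "t > 0" for t
    unfolding L_def using that bdd by (auto intro: cInf_lower)
  have lim: "(g \<longlongrightarrow> L) (at_right 0)"
  proof (rule tendstoI)
    fix e :: real assume e: "e > 0"
    have "Inf (g ` {0<..}) < L + e" using e L_def by simp
    then obtain t0 where t0: "t0 > 0" "g t0 < L + e"
      using cInf_lessD[OF ne] by blast
    show "\<forall>\<^sub>F t in at_right 0. dist (g t) L < e"
      unfolding eventually_at_right_less
    proof -
      have "\<forall>\<^sub>F t in at_right 0. t < t0"
        using eventually_at_right_real[OF t0(1)] by (rule eventually_mono) simp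
      moreover have "\<forall>\<^sub>F t in at_right (0::real). t > 0"
        by (simp add: eventually_at_right_less)
      ultimately show "\<forall>\<^sub>F t in at_right 0. dist (g t) L < e"
      proof (rule eventually_elim2)
        fix t :: real assume "t < t0" "t > 0"
        then have "g t \<le> g t0" unfolding g_def by (rule_tac quot_mono) auto
        then show "dist (g t) L < e" using Lle[OF \<open>t > 0\<close>] t0 by (simp add: dist_real_def)
      qed
    qed
  qed
  have lim2: "((\<lambda>t. norm x * (norm (x + t *\<^sub>R y) - norm x) / t) \<longlongrightarrow> norm x * L) (at_right 0)"
    using tendsto_mult[OF tendsto_const lim, of "norm x"] unfolding g_def by (simp add: times_divide_eq_right)
  have rho: "rho_plus x y = norm x * L"
    unfolding rho_plus_def using lim2 by (intro tendsto_Lim) auto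
  have nx: "norm x > 0" using assms by simp
  have "rho_plus x y < 0 \<longleftrightarrow> L < 0" using rho nx by (simp add: mult_less_0_iff)
  also have "\<dots> \<longleftrightarrow> (\<exists>t>0. g t < 0)"
    unfolding L_def using cInf_less_iff[OF ne bdd, of 0] by auto
  also have "\<dots> \<longleftrightarrow> (\<exists>t>0. norm (x + t *\<^sub>R y) < norm x)"
    unfolding g_def by (auto simp: divide_less_0_iff)
  also have "\<dots> \<longleftrightarrow> (\<exists>l::real. \<exists>r::real. l < 0 \<and> r > 0 \<and>
            y \<in> ball (l *\<^sub>R x) r \<and> 0 \<notin> ball (l *\<^sub>R x) r)"
  proof
    assume "\<exists>t>0. norm (x + t *\<^sub>R y) < norm x"
    then obtain t where t: "t > 0" "norm (x + t *\<^sub>R y) < norm x" by blast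
    define l where "l = - 1 / t"
    have "l *\<^sub>R x - y = l *\<^sub>R (x + t *\<^sub>R y)"
      using t unfolding l_def by (simp add: scaleR_add_right)
    then have "norm (l *\<^sub>R x - y) = norm (l *\<^sub>R (x + t *\<^sub>R y))" by simp
    also have "\<dots> = (1/t) * norm (x + t *\<^sub>R y)" using t unfolding l_def by simp
    also have "\<dots> < (1/t) * norm x" using t by (simp add: divide_strict_right_mono)
    finally have "norm (l *\<^sub>R x - y) < norm (l *\<^sub>R x)" using t unfolding l_def by simp
    moreover have "l < 0" using t unfolding l_def by simp
    moreover have "norm (l *\<^sub>R x) > 0" using \<open>l < 0\<close> nx by (simp add: mult_neg_pos)
    ultimately show "\<exists>l::real. \<exists>r::real. l < 0 \<and> r > 0 \<and>
            y \<in> ball (l *\<^sub>R x) r \<and> 0 \<notin> ball (l *\<^sub>R x) r"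
      by (intro exI[of _ l] exI[of _ "norm (l *\<^sub>R x)"]) (simp add: dist_norm)
  next
    assume "\<exists>l::real. \<exists>r::real. l < 0 \<and> r > 0 \<and>
            y \<in> ball (l *\<^sub>R x) r \<and> 0 \<notin> ball (l *\<^sub>R x) r"
    then obtain l r where lr: "l < 0" "r > 0" "norm (l *\<^sub>R x - y) < r" "norm (l *\<^sub>R x) \<ge> r"
      by (auto simp: dist_norm)
    define t where "t = - 1 / l"
    have t: "t > 0" using lr unfolding t_def by simp
    have "norm (x + t *\<^sub>R y) = norm (t *\<^sub>R (y - l *\<^sub>R x))"
      using lr unfolding t_def by (simp add: algebra_simps)
    also have "\<dots> = t * norm (l *\<^sub>R x - y)" using t by (simp add: norm_minus_commute)
    also have "\<dots> < t * norm (l *\<^sub>R x)" using t lr by (intro mult_strict_left_mono) auto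
    also have "\<dots> = norm x" using lr unfolding t_def by simp
    finally show "\<exists>t>0. norm (x + t *\<^sub>R y) < norm x" using t by blast
  qed
  finally show ?thesis by simp
qed

end
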